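(* Fix integers $e>1$ and $k\ge1$, and let $m>3$ be a vertex of the finite tree $\mathcal{T}_{e,3}^k$. Then the number of children of $m$ in $\mathcal{T}_{e,3}^k$ equals $$\sum_{j=0}^{\lfloor m/2^e\rfloor}\binom{k}{j}\binom{k-j}{m-j\cdot 2^e}.$$
   Context: For integers $b>1$, $e>1$ and a positive integer $n=\sum_{i=0}^{r} d_i b^i$ written in base $b$ (digits $0\le d_i\le b-1$), the $e$-power base-$b$ happy function is $S_{e,b}(n)=\sum_{i=0}^{r} d_i^e$. A positive integer $n$ is $e$-power $b$-happy if $S_{e,b}^{\ell}(n)=1$ for some $\ell\ge 1$. The tree $\mathcal{T}_{e,b}$ has as vertices all $e$-power $b$-happy numbers, with root $1$; a happy number $n\neq 1$ is a child of the vertex $S_{e,b}(n)$. For $k\ge1$, $\mathcal{T}_{e,b}^k$ is the subtree on the happy numbers having at most $k$ digits in base $b$ (i.e. $n<b^k$); thus the children of a vertex $m$ in $\mathcal{T}_{e,b}^k$ are the happy integers $n$ with $1\le n<b^k$, $n\neq1$, and $S_{e,b}(n)=m$. Binomial coefficients $\binom{a}{c}$ are taken to be $0$ when $c<0$ or $c>a$ (including when $a<0$). *)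

theory Defs
  imports Main
begin

function happy_S :: "nat \<Rightarrow> nat \<Rightarrow> nat \<Rightarrow> nat" where
  "happy_S e b n = (if n = 0 \<or> b \<le> 1 then 0 else (n mod b) ^ e + happy_S e b (n div b))"
  by pat_completeness auto
termination by (relation "measure (\<lambda>(e, b, n). n)") auto

definition happy :: "nat \<Rightarrow> nat \<Rightarrow> nat \<Rightarrow> bool" where
  "happy e b n \<longleftrightarrow> n \<ge> 1 \<and> (\<exists>l\<ge>1. (happy_S e b ^^ l) n = 1)"

definition tree_vertex :: "nat \<Rightarrow> nat \<Rightarrow> nat \<Rightarrow> nat \<Rightarrow> bool" where
  "tree_vertex e b k n \<longleftrightarrow> happy e b n \<and> n < b ^ k"

definition tree_children :: "nat \<Rightarrow> nat \<Rightarrow> nat \<Rightarrow> nat \<Rightarrow> nat set" where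
  "tree_children e b k m = {n. 1 \<le> n \<and> n < b ^ k \<and> n \<noteq> 1 \<and> happy e b n \<and> happy_S e b n = m}"

end

theory Submission
  imports Defs
begin

fun cnt :: "nat \<Rightarrow> nat \<Rightarrow> nat \<Rightarrow> nat" where
  "cnt d 0 n = 0"
| "cnt d (Suc k) n = (if n mod 3 = d then 1 else 0) + cnt d k (n div 3)"

lemma S0: "happy_S e b 0 = 0"
  by (subst happy_S.simps) simp

lemma S1: "happy_S e 3 1 = 1"
  by (subst happy_S.simps) (simp add: S0)

lemma Sstep: assumes "e > 0"
  shows "happy_S e 3 n = (n mod 3)^e + happy_S e 3 (n div 3)"
proof (cases "n = 0")
  case True thus ?thesis using assms by (simp add: S0)
next
  case False thus ?thesis by (subst happy_S.simps) simp
qed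

lemma S_cnt: assumes "e > 0"
  shows "n < 3^k \<Longrightarrow> happy_S e 3 n = cnt 1 k n + cnt 2 k n * 2^e"
proof (induction k arbitrary: n)
  case 0 thus ?case by (simp add: S0)
next
  case (Suc k)
  have "n div 3 < 3^k" using Suc.prems by auto
  hence ih: "happy_S e 3 (n div 3) = cnt 1 k (n div 3) + cnt 2 k (n div 3) * 2^e" using Suc.IH by blast
  have "n mod 3 = 0 \<or> n mod 3 = 1 \<or> n mod 3 = 2" by auto
  thus ?case using assms ih Sstep[OF assms, of n] by (auto simp: algebra_simps)
qed

lemma split3:
  fixes K :: nat
  shows "card {n. n < 3*K \<and> P n} = card {q. q<K \<and> P (3*q)} + card {q. q<K \<and> P (3*q+1)} + card {q. q<K \<and> P (3*q+2)}"
proof -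
  have eq: "{n. n < 3*K \<and> P n} = ((\<lambda>q. 3*q) ` {q. q<K \<and> P (3*q)} \<union> (\<lambda>q. 3*q+1) ` {q. q<K \<and> P (3*q+1)}) \<union> (\<lambda>q. 3*q+2) ` {q. q<K \<and> P (3*q+2)}"
  proof (rule set_eqI, rule iffI)
    fix n assume "n \<in> {n. n < 3*K \<and> P n}"
    hence n: "n < 3*K" "P n" by auto
    have d: "n = 3*(n div 3) + n mod 3" by simp
    have "n mod 3 = 0 \<or> n mod 3 = 1 \<or> n mod 3 = 2" by auto
    moreover have "n div 3 < K" using n by auto
    ultimately show "n \<in> ((\<lambda>q. 3*q) ` {q. q<K \<and> P (3*q)} \<union> (\<lambda>q. 3*q+1) ` {q. q<K \<and> P (3*q+1)}) \<union> (\<lambda>q. 3*q+2) ` {q. q<K \<and> P (3*q+2)}"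
    proof (elim disjE)
      assume "n mod 3 = 0" "n div 3 < K"
      hence "n = 3 * (n div 3)" using d by simp
      thus ?thesis using n \<open>n div 3 < K\<close> by (intro UnI1 UnI1 image_eqI[of _ _ "n div 3"]) auto
    next
      assume "n mod 3 = 1" "n div 3 < K"
      hence "n = 3 * (n div 3) + 1" using d by simp
      thus ?thesis using n \<open>n div 3 < K\<close> by (intro UnI1 UnI2 image_eqI[of _ _ "n div 3"]) auto
    next
      assume "n mod 3 = 2" "n div 3 < K"
      hence "n = 3 * (n div 3) + 2" using d by simp
      thus ?thesis using n \<open>n div 3 < K\<close> by (intro UnI2 image_eqI[of _ _ "n div 3"]) auto
    qed
  qed auto
  have f: "finite {q. q<K \<and> Q q}" for Q :: "nat \<Rightarrow> bool" by simp
  show ?thesis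
    apply (subst eq)
    apply (subst card_Un_disjoint)
       apply simp apply simp apply (auto; presburger)
    apply (subst card_Un_disjoint)
       apply simp apply simp apply (auto; presburger)
    apply (subst card_image, simp add: inj_on_def)+
    by simp
qed

lemma binid: "(k choose b)*((k-b) choose a) + (if a=0 then 0 else (k choose b)*((k-b) choose (a-1)))
  + (if b=0 then 0 else (k choose (b-1))*((k-(b-1)) choose a)) = (Suc k choose b) * ((Suc k - b) choose a)"
proof (cases "b \<le> k")
  case True
  hence e1: "Suc k - b = Suc (k - b)" by simp
  have p1: "((k-b) choose a) + (if a=0 then 0 else ((k-b) choose (a-1))) = (Suc (k-b) choose a)"
    by (cases a) auto
  have q: "(k choose b)*((k-b) choose a) + (if a=0 then 0 else (k choose b)*((k-b) choose (a-1)))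
     = (k choose b) * (((k-b) choose a) + (if a=0 then 0 else ((k-b) choose (a-1))))"
    by (cases "a=0") (simp_all add: distrib_left)
  also have "\<dots> = (k choose b) * (Suc (k-b) choose a)" using p1 by simp
  finally have q2: "(k choose b)*((k-b) choose a) + (if a=0 then 0 else (k choose b)*((k-b) choose (a-1)))
     = (k choose b) * (Suc (k-b) choose a)" .
  show ?thesis
  proof (cases b)
    case 0 thus ?thesis using q2 e1 by simp
  next
    case (Suc b')
    have "k - (b-1) = Suc (k-b)" using True Suc by simp
    hence "(k choose b)*((k-b) choose a) + (if a=0 then 0 else (k choose b)*((k-b) choose (a-1)))
       + (if b=0 then 0 else (k choose (b-1))*((k-(b-1)) choose a))
       = (k choose b) * (Suc (k-b) choose a) + (k choose b') * (Suc (k-b) choose a)"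
      using q2 Suc by simp
    also have "\<dots> = (Suc k choose b) * (Suc (k-b) choose a)" using Suc by (simp add: algebra_simps)
    finally show ?thesis using e1 by simp
  qed
next
  case False
  show ?thesis
  proof (cases "b = Suc k")
    case True thus ?thesis by (cases a) auto
  next
    case False
    with \<open>\<not> b \<le> k\<close> have "b > Suc k" by simp
    hence "k < b" "k < b - 1" by auto
    thus ?thesis using \<open>b > Suc k\<close> by (simp add: binomial_eq_0)
  qed
qed

lemma count: "card {n. n < 3^k \<and> cnt 1 k n = a \<and> cnt 2 k n = b} = (k choose b) * ((k-b) choose a)"
proof (induction k arbitrary: a b)
  case 0
  have "{n. n < 3^0 \<and> cnt 1 0 n = a \<and> cnt 2 0 n = b} = (if a = 0 \<and> b = 0 then {0} else {})" by auto
  thus ?case by (cases a; cases b) auto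
next
  case (Suc k)
  have m: "(3*q+r) mod 3 = r" "(3*q+r) div 3 = q" if "r < 3" for q r :: nat using that by auto
  have s0: "{q. q<3^k \<and> cnt 1 (Suc k) (3*q) = a \<and> cnt 2 (Suc k) (3*q) = b}
      = {q. q<3^k \<and> cnt 1 k q = a \<and> cnt 2 k q = b}" by auto
  have s1: "{q. q<3^k \<and> cnt 1 (Suc k) (3*q+1) = a \<and> cnt 2 (Suc k) (3*q+1) = b}
      = (if a = 0 then {} else {q. q<3^k \<and> cnt 1 k q = a-1 \<and> cnt 2 k q = b})"
    using m[of 1] by auto
  have s2: "{q. q<3^k \<and> cnt 1 (Suc k) (3*q+2) = a \<and> cnt 2 (Suc k) (3*q+2) = b}
      = (if b = 0 then {} else {q. q<3^k \<and> cnt 1 k q = a \<and> cnt 2 k q = b-1})"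
    using m[of 2] by auto
  have "card {n. n < 3^Suc k \<and> cnt 1 (Suc k) n = a \<and> cnt 2 (Suc k) n = b}
     = card {q. q<3^k \<and> cnt 1 (Suc k) (3*q) = a \<and> cnt 2 (Suc k) (3*q) = b}
     + card {q. q<3^k \<and> cnt 1 (Suc k) (3*q+1) = a \<and> cnt 2 (Suc k) (3*q+1) = b}
     + card {q. q<3^k \<and> cnt 1 (Suc k) (3*q+2) = a \<and> cnt 2 (Suc k) (3*q+2) = b}"
    using split3[of "3^k" "\<lambda>n. cnt 1 (Suc k) n = a \<and> cnt 2 (Suc k) n = b"] by simp
  also have "\<dots> = (k choose b)*((k-b) choose a) + (if a=0 then 0 else (k choose b)*((k-b) choose (a-1)))
    + (if b=0 then 0 else (k choose (b-1))*((k-(b-1)) choose a))"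
    unfolding s0 s1 s2 using Suc.IH[of a b] Suc.IH[of "a-1" b] Suc.IH[of a "b-1"]
    by (cases "a=0"; cases "b=0") simp_all
  also have "\<dots> = (Suc k choose b) * ((Suc k - b) choose a)" by (rule binid)
  finally show ?case .
qed

theorem mainTheorem4:
  fixes e k m :: nat
  assumes "e > 1" and "k \<ge> 1" and "m > 3" and "tree_vertex e 3 k m"
  shows "card (tree_children e 3 k m) =
    (\<Sum>j = 0..m div 2 ^ e. (k choose j) * ((k - j) choose (m - j * 2 ^ e)))"
proof -
  have e0: "e > 0" using assms by simp
  obtain l where l: "l \<ge> 1" "(happy_S e 3 ^^ l) m = 1"
    using assms(4) unfolding tree_vertex_def happy_def by blast
  have ch: "tree_children e 3 k m = {n. n < 3^k \<and> happy_S e 3 n = m}"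
  proof (rule set_eqI, rule iffI)
    fix n assume "n \<in> tree_children e 3 k m"
    thus "n \<in> {n. n < 3^k \<and> happy_S e 3 n = m}" unfolding tree_children_def by blast
  next
    fix n assume "n \<in> {n. n < 3^k \<and> happy_S e 3 n = m}"
    hence n: "n < 3^k" "happy_S e 3 n = m" by auto
    have "n \<noteq> 0"
    proof
      assume "n = 0" hence "m = 0" using n(2) S0[of e 3] by metis
      with assms(3) show False by simp
    qed
    moreover have "n \<noteq> 1"
    proof
      assume "n = 1" hence "m = 1" using n(2) S1[of e] by metis
      with assms(3) show False by simp
    qed
    moreover have "(happy_S e 3 ^^ Suc l) n = (happy_S e 3 ^^ l) (happy_S e 3 n)"
      by (simp only: funpow_Suc_right comp_def)
    hence "(happy_S e 3 ^^ Suc l) n = 1" using l(2) n(2) by (simp only:)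
    moreover have "1 \<le> n" using \<open>n \<noteq> 0\<close> by simp
    moreover have "Suc l \<ge> 1" by simp
    ultimately have "happy e 3 n" unfolding happy_def by blast
    thus "n \<in> tree_children e 3 k m" using n \<open>n \<noteq> 0\<close> \<open>n \<noteq> 1\<close>
      unfolding tree_children_def by simp
  qed
  have p: "(0::nat) < 2^e" by simp
  have un: "{n. n < 3^k \<and> happy_S e 3 n = m} =
     (\<Union>j\<in>{0..m div 2^e}. {n. n < 3^k \<and> cnt 1 k n = m - j*2^e \<and> cnt 2 k n = j})"
  proof (rule set_eqI, rule iffI)
    fix n assume "n \<in> {n. n < 3^k \<and> happy_S e 3 n = m}"
    hence n: "n < 3^k" "cnt 1 k n + cnt 2 k n * 2^e = m" using S_cnt[OF e0] by auto
    hence "cnt 2 k n \<le> m div 2^e" using p by (metis le_add2 less_eq_div_iff_mult_less_eq)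
    thus "n \<in> (\<Union>j\<in>{0..m div 2^e}. {n. n < 3^k \<and> cnt 1 k n = m - j*2^e \<and> cnt 2 k n = j})"
      using n by auto
  next
    fix n assume "n \<in> (\<Union>j\<in>{0..m div 2^e}. {n. n < 3^k \<and> cnt 1 k n = m - j*2^e \<and> cnt 2 k n = j})"
    then obtain j where j: "j \<le> m div 2^e" "n < 3^k" "cnt 1 k n = m - j*2^e" "cnt 2 k n = j" by auto
    have "j * 2^e \<le> m" using j(1) p by (metis less_eq_div_iff_mult_less_eq)
    thus "n \<in> {n. n < 3^k \<and> happy_S e 3 n = m}" using j S_cnt[OF e0, of n k] by auto
  qed
  have "card (tree_children e 3 k m) =
     (\<Sum>j\<in>{0..m div 2^e}. card {n. n < 3^k \<and> cnt 1 k n = m - j*2^e \<and> cnt 2 k n = j})"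
    unfolding ch un by (rule card_UN_disjoint) auto
  also have "\<dots> = (\<Sum>j = 0..m div 2 ^ e. (k choose j) * ((k - j) choose (m - j * 2 ^ e)))"
    by (rule sum.cong) (rule refl, rule count)
  finally show ?thesis .
qed

end
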